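(* Let $\mathbb K$ be a field, let $A,A^*$ be a TD pair over $\mathbb K$, and let $q$ be a nonzero scalar in $\mathbb K$ with $q\ne 1,-1$. Then the following are equivalent: (i) $A,A^*$ satisfy the $q$-Serre relations $A^3A^*-(q+q^{-1}+1)A^2A^*A+(q+q^{-1}+1)AA^*A^2-A^*A^3=0$ and $A^{*3}A-(q+q^{-1}+1)A^{*2}AA^*+(q+q^{-1}+1)A^*AA^{*2}-AA^{*3}=0$; (ii) there exists an eigenvalue sequence for $A,A^*$ which is in $q$-geometric progression, and there exists a dual eigenvalue sequence for $A,A^*$ which is in $q$-geometric progression.
   Context: A TD pair on a finite-dimensional nonzero $\mathbb K$-vector space $V$ is an ordered pair $A,A^*$ of diagonalizable linear maps $V\to V$ such that there is an ordering $V_0,\dots,V_d$ of the eigenspaces of $A$ with $A^*V_i\subseteq V_{i-1}+V_i+V_{i+1}$ ($V_{-1}=V_{d+1}=0$), an ordering $V^*_0,\dots,V^*_\delta$ of the eigenspaces of $A^*$ with $AV^*_i\subseteq V^*_{i-1}+V^*_i+V^*_{i+1}$ ($V^*_{-1}=V^*_{\delta+1}=0$), and no subspace other than $0,V$ is invariant under both $A$ and $A^*$. An eigenvalue sequence for $A,A^*$ is an ordering $\theta_0,\dots,\theta_d$ of the distinct eigenvalues of $A$ such that the corresponding eigenspaces satisfy the first ordering condition; a dual eigenvalue sequence for $A,A^*$ is an eigenvalue sequence for the pair $A^*,A$. A sequence $\theta_0,\dots,\theta_d$ is in $q$-geometric progression if $\theta_i=\theta_{i-1}q$ for $1\le i\le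 d$. *)

theory Defs
  imports "Jordan_Normal_Form.Char_Poly"
begin

text \<open>The finite-dimensional nonzero vector space V is modelled as K^n (n > 0),
  i.e. carrier_vec n; linear maps V -> V are n x n matrices.\<close>

definition diagonalizable_mat :: "'a::field mat \<Rightarrow> bool" where
  "diagonalizable_mat A = (\<exists>D. similar_mat A D \<and> diagonal_mat D)"

definition eigenspace_mat :: "nat \<Rightarrow> 'a::field mat \<Rightarrow> 'a \<Rightarrow> 'a vec set" where
  "eigenspace_mat n A \<theta> = {v \<in> carrier_vec n. A *\<^sub>v v = \<theta> \<cdot>\<^sub>v v}"

definition vsum_set :: "'a::field vec set \<Rightarrow> 'a vec set \<Rightarrow> 'a vec set" where
  "vsum_set S T = {x + y | x y. x \<in> S \<and> y \<in> T}"

definition espace_at :: "nat \<Rightarrow> 'a::field mat \<Rightarrow> nat \<Rightarrow> (nat \<Rightarrow> 'a) \<Rightarrow> int \<Rightarrow> 'a vec set" where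
  "espace_at n A d th j =
     (if 0 \<le> j \<and> j \<le> int d then eigenspace_mat n A (th (nat j)) else {0\<^sub>v n})"

definition eigen_ordering :: "'a::field mat \<Rightarrow> nat \<Rightarrow> (nat \<Rightarrow> 'a) \<Rightarrow> bool" where
  "eigen_ordering A d th = (inj_on th {..d} \<and> th ` {..d} = {\<theta>. eigenvalue A \<theta>})"

text \<open>Eigenvalue sequence for the pair A, B (B plays the role of A^*).\<close>
definition eigenvalue_seq :: "nat \<Rightarrow> 'a::field mat \<Rightarrow> 'a mat \<Rightarrow> nat \<Rightarrow> (nat \<Rightarrow> 'a) \<Rightarrow> bool" where
  "eigenvalue_seq n A B d th =
     (eigen_ordering A d th \<and>
      (\<forall>i\<le>d. \<forall>v \<in> eigenspace_mat n A (th i).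
         B *\<^sub>v v \<in> vsum_set (espace_at n A d th (int i - 1))
                     (vsum_set (espace_at n A d th (int i)) (espace_at n A d th (int i + 1)))))"

definition subspace_vec :: "nat \<Rightarrow> 'a::field vec set \<Rightarrow> bool" where
  "subspace_vec n W = (W \<subseteq> carrier_vec n \<and> 0\<^sub>v n \<in> W \<and>
     (\<forall>x\<in>W. \<forall>y\<in>W. x + y \<in> W) \<and> (\<forall>c. \<forall>x\<in>W. c \<cdot>\<^sub>v x \<in> W))"

definition TD_pair :: "nat \<Rightarrow> 'a::field mat \<Rightarrow> 'a mat \<Rightarrow> bool" where
  "TD_pair n A B =
     (0 < n \<and> A \<in> carrier_mat n n \<and> B \<in> carrier_mat n n \<and>
      diagonalizable_mat A \<and> diagonalizable_mat B \<and>
      (\<exists>d th. eigenvalue_seq n A B d th) \<and>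
      (\<exists>\<delta> th. eigenvalue_seq n B A \<delta> th) \<and>
      (\<forall>W. subspace_vec n W \<and> (\<forall>v\<in>W. A *\<^sub>v v \<in> W) \<and> (\<forall>v\<in>W. B *\<^sub>v v \<in> W)
           \<longrightarrow> W = {0\<^sub>v n} \<or> W = carrier_vec n))"

definition q_geometric :: "'a::field \<Rightarrow> nat \<Rightarrow> (nat \<Rightarrow> 'a) \<Rightarrow> bool" where
  "q_geometric q d th = (\<forall>i. 1 \<le> i \<and> i \<le> d \<longrightarrow> th i = th (i - 1) * q)"

definition q_serre :: "nat \<Rightarrow> 'a::field \<Rightarrow> 'a mat \<Rightarrow> 'a mat \<Rightarrow> bool" where
  "q_serre n q A B =
     (let \<beta> = q + inverse q + 1 in
      A * A * A * B - \<beta> \<cdot>\<^sub>m (A * A * B * A) + \<beta> \<cdot>\<^sub>m (A * B * A * A) - B * A * A * A = 0\<^sub>m n n)"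

end

theory Submission
  imports Defs
begin

lemma smult_mat_mult_vec:
  fixes X :: "'a::field mat"
  assumes "X \<in> carrier_mat n n" "v \<in> carrier_vec n"
  shows "(k \<cdot>\<^sub>m X) *\<^sub>v v = k \<cdot>\<^sub>v (X *\<^sub>v v)"
  using assms by (intro eq_vecI) (auto simp: scalar_prod_def sum_distrib_left ac_simps)

fun vsum_upto :: "nat \<Rightarrow> (nat \<Rightarrow> 'a::field vec) \<Rightarrow> nat \<Rightarrow> 'a vec" where
  "vsum_upto n f 0 = 0\<^sub>v n"
| "vsum_upto n f (Suc k) = f k + vsum_upto n f k"

lemma vsum_dim[simp]: "dim_vec (vsum_upto n f k) = n"
  by (induction k) simp_all

lemma vsum_carrier[simp]: "vsum_upto n f k \<in> carrier_vec n"
  by (rule carrier_vecI) simp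

lemma vsum_index[simp]: "i < n \<Longrightarrow> vsum_upto n f k $ i = (\<Sum>j<k. f j $ i)"
  by (induction k) (simp_all add: add.commute)

lemma vsum_mult: assumes "M \<in> carrier_mat n n" "\<And>j. j < k \<Longrightarrow> f j \<in> carrier_vec n"
  shows "M *\<^sub>v vsum_upto n f k = vsum_upto n (\<lambda>j. M *\<^sub>v f j) k"
  using assms
proof (induction k)
  case 0 then show ?case by (intro eq_vecI) auto
next
  case (Suc k)
  then show ?case by (auto simp: mult_add_distrib_mat_vec)
qed

definition Wset :: "nat \<Rightarrow> 'a::field mat \<Rightarrow> (nat \<Rightarrow> 'a) \<Rightarrow> nat \<Rightarrow> 'a vec set" where
  "Wset n A th k = {vsum_upto n f k | f. \<forall>j<k. f j \<in> eigenspace_mat n A (th j)}"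

lemma eig_carrier: "x \<in> eigenspace_mat n A t \<Longrightarrow> x \<in> carrier_vec n"
  by (simp add: eigenspace_mat_def)

lemma eig_zero: "A \<in> carrier_mat n n \<Longrightarrow> 0\<^sub>v n \<in> eigenspace_mat n A t"
  unfolding eigenspace_mat_def by (auto intro!: eq_vecI)

lemma eig_add: "A \<in> carrier_mat n n \<Longrightarrow> x \<in> eigenspace_mat n A t \<Longrightarrow> y \<in> eigenspace_mat n A t \<Longrightarrow> x + y \<in> eigenspace_mat n A t"
  unfolding eigenspace_mat_def by (auto simp: mult_add_distrib_mat_vec smult_add_distrib_vec)

lemma eig_smult: "A \<in> carrier_mat n n \<Longrightarrow> x \<in> eigenspace_mat n A t \<Longrightarrow> c \<cdot>\<^sub>v x \<in> eigenspace_mat n A t"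
  unfolding eigenspace_mat_def by (auto simp: mult_mat_vec intro!: eq_vecI)

lemma Wset_carrier: "x \<in> Wset n A th k \<Longrightarrow> x \<in> carrier_vec n"
  unfolding Wset_def using vsum_carrier eig_carrier by blast

lemma Wset_zero: assumes "A \<in> carrier_mat n n" shows "0\<^sub>v n \<in> Wset n A th k"
proof -
  have "vsum_upto n (\<lambda>_. 0\<^sub>v n) k = 0\<^sub>v n"
    by (intro eq_vecI) auto
  then show ?thesis unfolding Wset_def using eig_zero[OF assms] by (auto intro!: exI[of _ "\<lambda>_. 0\<^sub>v n"] simp del: vsum_upto.simps)
qed

lemma Wset_add: assumes "A \<in> carrier_mat n n" "x \<in> Wset n A th k" "y \<in> Wset n A th k"
  shows "x + y \<in> Wset n A th k"
proof -
  obtain f where f: "x = vsum_upto n f k" "\<forall>j<k. f j \<in> eigenspace_mat n A (th j)" using assms(2) unfolding Wset_def by auto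
  obtain g where g: "y = vsum_upto n g k" "\<forall>j<k. g j \<in> eigenspace_mat n A (th j)" using assms(3) unfolding Wset_def by auto
  have fc: "\<And>j. j<k \<Longrightarrow> f j \<in> carrier_vec n" "\<And>j. j<k \<Longrightarrow> g j \<in> carrier_vec n"
    using f g eig_carrier by blast+
  have "x + y = vsum_upto n (\<lambda>j. f j + g j) k"
  proof (intro eq_vecI)
    fix i assume "i < dim_vec (vsum_upto n (\<lambda>j. f j + g j) k)"
    then have i: "i < n" by simp
    have "(\<Sum>j<k. (f j + g j) $ i) = (\<Sum>j<k. f j $ i + g j $ i)"
      by (rule sum.cong) (use fc[THEN carrier_vecD] i in auto)
    then show "(x + y) $ i = vsum_upto n (\<lambda>j. f j + g j) k $ i"
      using i f g by (simp add: sum.distrib del: vsum_upto.simps)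
  qed (use f g in simp)
  then show ?thesis unfolding Wset_def using f g eig_add[OF assms(1)] by blast
qed

lemma Wset_smult: assumes "A \<in> carrier_mat n n" "x \<in> Wset n A th k"
  shows "c \<cdot>\<^sub>v x \<in> Wset n A th k"
proof -
  obtain f where f: "x = vsum_upto n f k" "\<forall>j<k. f j \<in> eigenspace_mat n A (th j)" using assms(2) unfolding Wset_def by auto
  have fc: "\<And>j. j<k \<Longrightarrow> f j \<in> carrier_vec n"
    using f eig_carrier by blast+
  have "c \<cdot>\<^sub>v x = vsum_upto n (\<lambda>j. c \<cdot>\<^sub>v f j) k"
  proof (intro eq_vecI)
    fix i assume "i < dim_vec (vsum_upto n (\<lambda>j. c \<cdot>\<^sub>v f j) k)"
    then have i: "i < n" by simp
    have "(\<Sum>j<k. (c \<cdot>\<^sub>v f j) $ i) = (\<Sum>j<k. c * f j $ i)"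
      by (rule sum.cong) (use fc[THEN carrier_vecD] i in auto)
    then show "(c \<cdot>\<^sub>v x) $ i = vsum_upto n (\<lambda>j. c \<cdot>\<^sub>v f j) k $ i"
      using i f by (simp add: sum_distrib_left del: vsum_upto.simps)
  qed (use f in simp)
  then show ?thesis unfolding Wset_def using f eig_smult[OF assms(1)] by blast
qed

lemma Wset_eig: assumes "A \<in> carrier_mat n n" "x \<in> eigenspace_mat n A (th j)" "j < k"
  shows "x \<in> Wset n A th k"
proof -
  define f where "f = (\<lambda>m. if m = j then x else 0\<^sub>v n)"
  have fe: "\<forall>m<k. f m \<in> eigenspace_mat n A (th m)" using assms eig_zero f_def by auto
  have fc: "\<And>m. f m \<in> carrier_vec n" using assms(2) eig_carrier unfolding f_def by auto
  have "x = vsum_upto n f k"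
  proof (intro eq_vecI)
    fix i assume i: "i < dim_vec (vsum_upto n f k)"
    then have i': "i < n" using vsum_carrier[of k f n] fc by auto
    have "(\<Sum>m<k. f m $ i) = (\<Sum>m\<in>{j}. f m $ i)"
      using assms(3) i' by (intro sum.mono_neutral_right) (auto simp: f_def)
    then show "x $ i = vsum_upto n f k $ i" using i' fc by (simp add: vsum_index f_def)
  qed (use fc assms eig_carrier[THEN carrier_vecD] in auto)
  then show ?thesis unfolding Wset_def using fe by blast
qed

lemma Wset_vsum: assumes "A \<in> carrier_mat n n" "\<And>j. j < m \<Longrightarrow> g j \<in> Wset n A th k"
  shows "vsum_upto n g m \<in> Wset n A th k"
  using assms by (induction m) (auto intro: Wset_add Wset_zero)

lemma Wset_A: assumes "A \<in> carrier_mat n n" "x \<in> Wset n A th k"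
  shows "A *\<^sub>v x \<in> Wset n A th k"
proof -
  obtain f where f: "x = vsum_upto n f k" "\<forall>j<k. f j \<in> eigenspace_mat n A (th j)" using assms(2) unfolding Wset_def by auto
  have "A *\<^sub>v x = vsum_upto n (\<lambda>j. A *\<^sub>v f j) k"
    unfolding f(1) by (rule vsum_mult) (use f eig_carrier assms(1) in blast)+
  also have "\<dots> \<in> Wset n A th k"
    using f assms(1) by (intro Wset_vsum) (auto intro!: Wset_eig eig_smult simp: eigenspace_mat_def)
  finally show ?thesis .
qed


lemma Wset_Suc: assumes "A \<in> carrier_mat n n" "w \<in> Wset n A th (Suc k)"
  shows "\<exists>u s. u \<in> eigenspace_mat n A (th k) \<and> s \<in> Wset n A th k \<and> w = u + s"
proof -
  obtain f where f: "w = vsum_upto n f (Suc k)" "\<forall>j<Suc k. f j \<in> eigenspace_mat n A (th j)" using assms(2) unfolding Wset_def by auto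
  have "vsum_upto n f k \<in> Wset n A th k" unfolding Wset_def using f(2) by auto
  then show ?thesis using f by auto
qed

lemma Wset_exclude: assumes A: "A \<in> carrier_mat n n"
  shows "w \<in> eigenspace_mat n A lam \<Longrightarrow> (\<forall>m<k. lam \<noteq> th m) \<Longrightarrow> w \<in> Wset n A th k \<Longrightarrow> w = 0\<^sub>v n"
proof (induction k arbitrary: w)
  case 0
  then show ?case unfolding Wset_def by auto
next
  case (Suc k)
  obtain u s where us: "u \<in> eigenspace_mat n A (th k)" "s \<in> Wset n A th k" "w = u + s"
    using Wset_Suc[OF A Suc.prems(3)] by blast
  have uc: "u \<in> carrier_vec n" and sc: "s \<in> carrier_vec n" and wc: "w \<in> carrier_vec n"
    using us Wset_carrier eig_carrier Suc.prems(1) by blast+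
  have Au: "A *\<^sub>v u = th k \<cdot>\<^sub>v u" using us(1) unfolding eigenspace_mat_def by auto
  have Aw: "A *\<^sub>v w = lam \<cdot>\<^sub>v w" using Suc.prems(1) unfolding eigenspace_mat_def by auto
  define z where "z = A *\<^sub>v s + (- th k) \<cdot>\<^sub>v s"
  have zW: "z \<in> Wset n A th k" unfolding z_def
    using us(2) A by (intro Wset_add Wset_smult Wset_A) auto
  have Aw2: "A *\<^sub>v w = th k \<cdot>\<^sub>v u + A *\<^sub>v s"
    using us(3) uc sc A Au by (simp add: mult_add_distrib_mat_vec)
  have zeq: "z = (lam - th k) \<cdot>\<^sub>v w"
  proof (intro eq_vecI)
    fix i assume "i < dim_vec ((lam - th k) \<cdot>\<^sub>v w)"
    then have i: "i < n" using wc by auto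
    have "(A *\<^sub>v w) $ i = (lam \<cdot>\<^sub>v w) $ i" using Aw by simp
    moreover have "(A *\<^sub>v w) $ i = th k * u $ i + (A *\<^sub>v s) $ i"
      using Aw2 i uc A by simp
    ultimately show "z $ i = ((lam - th k) \<cdot>\<^sub>v w) $ i"
      using i uc sc wc A us(3) unfolding z_def by (simp add: algebra_simps)
  qed (use wc sc A in \<open>simp add: z_def\<close>)
  have zE: "z \<in> eigenspace_mat n A lam" unfolding zeq using eig_smult[OF A Suc.prems(1)] .
  have "z = 0\<^sub>v n" using Suc.IH[OF zE _ zW] Suc.prems(2) by auto
  moreover have "lam - th k \<noteq> 0" using Suc.prems(2) by auto
  ultimately show ?case unfolding zeq
  proof -
    assume z0: "(lam - th k) \<cdot>\<^sub>v w = 0\<^sub>v n" and nz: "lam - th k \<noteq> 0"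
    show "w = 0\<^sub>v n"
    proof (intro eq_vecI)
      fix i assume "i < dim_vec (0\<^sub>v n :: 'a vec)"
      then have i: "i < n" by simp
      have "((lam - th k) \<cdot>\<^sub>v w) $ i = 0" using z0 i by simp
      then show "w $ i = 0\<^sub>v n $ i" using i wc nz by simp
    qed (use wc in simp)
  qed
qed


lemma mat_unit_index: fixes P :: "'a::field mat" assumes "P \<in> carrier_mat n n" "i < n" "k < n"
  shows "(P *\<^sub>v unit_vec n k) $ i = P $$ (i,k)"
  using assms by (simp add: scalar_prod_right_unit[OF assms(3)])

lemma diag_decomp:
  fixes A :: "'a::field mat"
  assumes A: "A \<in> carrier_mat n n" and dg: "diagonalizable_mat A"
    and eo: "eigen_ordering A d th" and v: "v \<in> carrier_vec n"
  shows "v \<in> Wset n A th (Suc d)"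
proof -
  obtain D where sim: "similar_mat A D" and diag: "diagonal_mat D"
    using dg unfolding diagonalizable_mat_def by auto
  obtain m P Q where PQ: "{A,D,P,Q} \<subseteq> carrier_mat m m" "P * Q = 1\<^sub>m m" "Q * P = 1\<^sub>m m" "A = P * D * Q"
    using similar_matD[OF sim] by blast
  have mn: "m = n" using PQ(1) A by auto
  have Pc: "P \<in> carrier_mat n n" and Qc: "Q \<in> carrier_mat n n" and Dc: "D \<in> carrier_mat n n"
    using PQ(1) mn by auto
  have AP: "A * P = P * D"
  proof -
    have "A * P = P * D * (Q * P)" unfolding PQ(4) using Pc Qc Dc
      by (simp add: assoc_mult_mat[of _ n n _ n _ n])
    also have "\<dots> = P * D" using PQ(3) mn Pc Dc by simp
    finally show ?thesis .
  qed
  define p where "p = (\<lambda>k. P *\<^sub>v unit_vec n k)"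
  have pc: "\<And>k. p k \<in> carrier_vec n" unfolding p_def using Pc by simp
  have eig: "\<exists>j\<le>d. p k \<in> eigenspace_mat n A (th j)" if k: "k < n" for k
  proof -
    have De: "D *\<^sub>v unit_vec n k = D $$ (k,k) \<cdot>\<^sub>v unit_vec n k"
    proof (intro eq_vecI)
      fix i assume "i < dim_vec (D $$ (k,k) \<cdot>\<^sub>v unit_vec n k)"
      then have i: "i < n" by simp
      show "(D *\<^sub>v unit_vec n k) $ i = (D $$ (k,k) \<cdot>\<^sub>v unit_vec n k) $ i"
        using i k Dc diag unfolding diagonal_mat_def by (auto simp: mat_unit_index)
    qed (use Dc in simp)
    have Ap: "A *\<^sub>v p k = D $$ (k,k) \<cdot>\<^sub>v p k"
    proof -
      have "A *\<^sub>v p k = (A * P) *\<^sub>v unit_vec n k" unfolding p_def using A Pc by simp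
      also have "\<dots> = P *\<^sub>v (D *\<^sub>v unit_vec n k)" unfolding AP using Pc Dc by simp
      also have "\<dots> = D $$ (k,k) \<cdot>\<^sub>v p k" unfolding De p_def using Pc by (simp add: mult_mat_vec)
      finally show ?thesis .
    qed
    have "Q *\<^sub>v p k = unit_vec n k" unfolding p_def
      using Pc Qc PQ(3) mn by (simp flip: assoc_mult_mat_vec)
    moreover have "Q *\<^sub>v 0\<^sub>v n = 0\<^sub>v n" using Qc by (intro eq_vecI) auto
    ultimately have pnz: "p k \<noteq> 0\<^sub>v n" using k
      by (metis unit_vec_nonzero)
    have "eigenvalue A (D $$ (k,k))"
      unfolding eigenvalue_def eigenvector_def using A pc pnz Ap by auto
    then obtain j where "j \<le> d" "th j = D $$ (k,k)" using eo unfolding eigen_ordering_def by force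
    then show ?thesis using Ap pc unfolding eigenspace_mat_def by auto
  qed
  define w where "w = Q *\<^sub>v v"
  have "v = vsum_upto n (\<lambda>k. w $ k \<cdot>\<^sub>v p k) n"
  proof (intro eq_vecI)
    fix i assume "i < dim_vec (vsum_upto n (\<lambda>k. w $ k \<cdot>\<^sub>v p k) n)"
    then have i: "i < n" by simp
    have "v = (P * Q) *\<^sub>v v" using PQ(2) mn v by simp
    also have "\<dots> = P *\<^sub>v w" unfolding w_def using Pc Qc v by simp
    finally have "v $ i = row P i \<bullet> w" using i Pc by simp
    also have "\<dots> = (\<Sum>k<n. P $$ (i,k) * w $ k)"
      unfolding scalar_prod_def using i Pc Qc w_def by (auto intro!: sum.cong simp: lessThan_atLeast0)
    also have "\<dots> = (\<Sum>k<n. (w $ k \<cdot>\<^sub>v p k) $ i)"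
      using i pc Pc by (auto intro!: sum.cong simp: p_def mult.commute)
    finally show "v $ i = vsum_upto n (\<lambda>k. w $ k \<cdot>\<^sub>v p k) n $ i" using i by simp
  qed (use v in simp)
  also have "\<dots> \<in> Wset n A th (Suc d)"
  proof (rule Wset_vsum[OF A])
    fix k assume k: "k < n"
    obtain j where "j \<le> d" "p k \<in> eigenspace_mat n A (th j)" using eig[OF k] by blast
    then show "w $ k \<cdot>\<^sub>v p k \<in> Wset n A th (Suc d)"
      using A by (intro Wset_smult Wset_eig) auto
  qed
  finally show ?thesis .
qed


definition sp :: "'a::field \<Rightarrow> 'a \<Rightarrow> 'a \<Rightarrow> 'a" where
  "sp q y x = y^3 - (q + inverse q + 1) * y^2 * x + (q + inverse q + 1) * y * x^2 - x^3"

definition serre_mat :: "nat \<Rightarrow> 'a::field \<Rightarrow> 'a mat \<Rightarrow> 'a mat \<Rightarrow> 'a mat" where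
  "serre_mat n q A B = (let \<beta> = q + inverse q + 1 in
      A * A * A * B - \<beta> \<cdot>\<^sub>m (A * A * B * A) + \<beta> \<cdot>\<^sub>m (A * B * A * A) - B * A * A * A)"

lemma q_serre_alt: "q_serre n q A B = (serre_mat n q A B = 0\<^sub>m n n)"
  unfolding q_serre_def serre_mat_def by (simp add: Let_def)

lemma mv4: fixes A :: "'a::field mat"
  assumes "A \<in> carrier_mat n n" "B \<in> carrier_mat n n" "C \<in> carrier_mat n n" "D \<in> carrier_mat n n" "v \<in> carrier_vec n"
  shows "(A*B*C*D) *\<^sub>v v = A *\<^sub>v (B *\<^sub>v (C *\<^sub>v (D *\<^sub>v v)))"
proof -
  have "(A*B*C*D) *\<^sub>v v = (A*B*C) *\<^sub>v (D *\<^sub>v v)" by (rule assoc_mult_mat_vec) (use assms in auto)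
  also have "\<dots> = (A*B) *\<^sub>v (C *\<^sub>v (D *\<^sub>v v))" by (rule assoc_mult_mat_vec) (use assms in auto)
  also have "\<dots> = A *\<^sub>v (B *\<^sub>v (C *\<^sub>v (D *\<^sub>v v)))" by (rule assoc_mult_mat_vec) (use assms in auto)
  finally show ?thesis .
qed

lemma lin4: fixes M1 :: "'a::field mat"
  assumes "M1 \<in> carrier_mat n n" "M2 \<in> carrier_mat n n" "M3 \<in> carrier_mat n n" "M4 \<in> carrier_mat n n" "v \<in> carrier_vec n"
  shows "(M1 - b \<cdot>\<^sub>m M2 + b \<cdot>\<^sub>m M3 - M4) *\<^sub>v v = M1 *\<^sub>v v - b \<cdot>\<^sub>v (M2 *\<^sub>v v) + b \<cdot>\<^sub>v (M3 *\<^sub>v v) - M4 *\<^sub>v v"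
  using assms by (intro eq_vecI) (auto simp: scalar_prod_def sum_distrib_left sum_subtractf sum.distrib algebra_simps)

lemma serre_expand:
  fixes A B :: "'a::field mat"
  assumes A: "A \<in> carrier_mat n n" and B: "B \<in> carrier_mat n n" and v: "v \<in> carrier_vec n"
    and Av: "A *\<^sub>v v = x \<cdot>\<^sub>v v"
    and u1: "u1 \<in> carrier_vec n" and u2: "u2 \<in> carrier_vec n" and u3: "u3 \<in> carrier_vec n"
    and Au1: "A *\<^sub>v u1 = y1 \<cdot>\<^sub>v u1" and Au2: "A *\<^sub>v u2 = y2 \<cdot>\<^sub>v u2" and Au3: "A *\<^sub>v u3 = y3 \<cdot>\<^sub>v u3"
    and Bv: "B *\<^sub>v v = u1 + (u2 + u3)"
  shows "serre_mat n q A B *\<^sub>v v = sp q y1 x \<cdot>\<^sub>v u1 + (sp q y2 x \<cdot>\<^sub>v u2 + sp q y3 x \<cdot>\<^sub>v u3)"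
proof -
  define L where "L = (\<lambda>a b c. a \<cdot>\<^sub>v u1 + (b \<cdot>\<^sub>v u2 + c \<cdot>\<^sub>v u3))"
  have Lc: "L a b c \<in> carrier_vec n" for a b c unfolding L_def using u1 u2 u3 by simp
  have hL: "A *\<^sub>v L a b c = L (a*y1) (b*y2) (c*y3)" for a b c
    unfolding L_def using A u1 u2 u3
    by (simp add: mult_add_distrib_mat_vec mult_mat_vec Au1 Au2 Au3 smult_smult_assoc)
  have hS: "k \<cdot>\<^sub>v L a b c = L (k*a) (k*b) (k*c)" for k a b c
    unfolding L_def using u1 u2 u3 by (intro eq_vecI) (auto simp: algebra_simps)
  have BL: "B *\<^sub>v v = L 1 1 1" unfolding L_def Bv by simp
  have t1: "(A * A * A * B) *\<^sub>v v = L (y1^3) (y2^3) (y3^3)"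
    unfolding mv4[OF A A A B v] by (simp add: BL hL power3_eq_cube)
  have t2: "(A * A * B * A) *\<^sub>v v = L (x*y1^2) (x*y2^2) (x*y3^2)"
    unfolding mv4[OF A A B A v] using A B v by (simp add: mv4 Av mult_mat_vec BL hL hS power2_eq_square mult.commute mult.left_commute)
  have t3: "(A * B * A * A) *\<^sub>v v = L (x^2*y1) (x^2*y2) (x^2*y3)"
    unfolding mv4[OF A B A A v] using A B v by (simp add: mv4 Av mult_mat_vec BL hL hS power2_eq_square mult.commute mult.left_commute)
  have t4: "(B * A * A * A) *\<^sub>v v = L (x^3) (x^3) (x^3)"
    unfolding mv4[OF B A A A v] using A B v by (simp add: mv4 Av mult_mat_vec BL hL hS power3_eq_cube mult.commute mult.left_commute)
  define \<beta> where "\<beta> = q + inverse q + 1"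
  have "serre_mat n q A B *\<^sub>v v = (A * A * A * B) *\<^sub>v v - \<beta> \<cdot>\<^sub>v ((A * A * B * A) *\<^sub>v v)
      + \<beta> \<cdot>\<^sub>v ((A * B * A * A) *\<^sub>v v) - (B * A * A * A) *\<^sub>v v"
    unfolding serre_mat_def Let_def \<beta>_def[symmetric]
    by (rule lin4) (use A B v in auto)
  also have "\<dots> = sp q y1 x \<cdot>\<^sub>v u1 + (sp q y2 x \<cdot>\<^sub>v u2 + sp q y3 x \<cdot>\<^sub>v u3)"
    unfolding t1 t2 t3 t4 L_def using u1 u2 u3
    by (intro eq_vecI) (auto simp: sp_def \<beta>_def algebra_simps)
  finally show ?thesis .
qed


lemma espace_eig: assumes "A \<in> carrier_mat n n" "u \<in> espace_at n A d th j"
  shows "u \<in> carrier_vec n \<and> A *\<^sub>v u = th (nat j) \<cdot>\<^sub>v u"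
proof (cases "0 \<le> j \<and> j \<le> int d")
  case True
  then show ?thesis using assms unfolding espace_at_def eigenspace_mat_def by auto
next
  case False
  then have "u = 0\<^sub>v n" using assms unfolding espace_at_def by auto
  then show ?thesis using assms by (auto intro!: eq_vecI)
qed

lemma sp_factor: assumes "q \<noteq> 0"
  shows "q * sp q y x = (y - x) * (y - q * x) * (q * y - x)"
proof -
  have h: "q * (q + inverse q + 1) = q*q + 1 + q" using assms by (simp add: distrib_left)
  have "q * sp q y x = q*y^3 - (q * (q + inverse q + 1))*y^2*x + (q * (q + inverse q + 1))*y*x^2 - q*x^3"
    unfolding sp_def by (simp add: algebra_simps)
  also have "\<dots> = (y - x) * (y - q * x) * (q * y - x)" unfolding h
    by (simp add: algebra_simps power2_eq_square power3_eq_cube)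
  finally show ?thesis .
qed

lemma sp_zero_iff: assumes "(q::'a::field) \<noteq> 0"
  shows "sp q y x = 0 \<longleftrightarrow> y = x \<or> y = q * x \<or> q * y = x"
proof -
  have "sp q y x = 0 \<longleftrightarrow> q * sp q y x = 0" using assms by simp
  also have "\<dots> \<longleftrightarrow> y = x \<or> y = q * x \<or> q * y = x" unfolding sp_factor[OF assms] by auto
  finally show ?thesis .
qed

lemma term_zero: "sp q y x = 0 \<or> u = 0\<^sub>v n \<Longrightarrow> u \<in> carrier_vec n \<Longrightarrow> sp q y x \<cdot>\<^sub>v u = 0\<^sub>v n"
  by (auto intro!: eq_vecI)

lemma vsum_setD: "x \<in> vsum_set S1 (vsum_set S2 S3) \<Longrightarrow> \<exists>u1 u2 u3. u1 \<in> S1 \<and> u2 \<in> S2 \<and> u3 \<in> S3 \<and> x = u1 + (u2 + u3)"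
  unfolding vsum_set_def by blast

lemma mat_zero_by_vec: fixes M :: "'a::field mat"
  assumes "M \<in> carrier_mat n n" "\<And>v. v \<in> carrier_vec n \<Longrightarrow> M *\<^sub>v v = 0\<^sub>v n"
  shows "M = 0\<^sub>m n n"
proof (rule eq_matI)
  fix i j assume i: "i < dim_row (0\<^sub>m n n :: 'a mat)" and j: "j < dim_col (0\<^sub>m n n :: 'a mat)"
  have "M $$ (i,j) = (M *\<^sub>v unit_vec n j) $ i" using i j assms(1) by (simp add: mat_unit_index)
  also have "\<dots> = 0" using assms(2)[of "unit_vec n j"] i by simp
  finally show "M $$ (i,j) = 0\<^sub>m n n $$ (i,j)" using i j by simp
qed (use assms in auto)

lemma serre_carrier: "A \<in> carrier_mat n n \<Longrightarrow> B \<in> carrier_mat n n \<Longrightarrow> serre_mat n q A B \<in> carrier_mat n n"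
  unfolding serre_mat_def Let_def by auto

lemma serre_of_geom:
  fixes A B :: "'a::field mat"
  assumes A: "A \<in> carrier_mat n n" and B: "B \<in> carrier_mat n n" and dg: "diagonalizable_mat A"
    and es: "eigenvalue_seq n A B d th" and geo: "q_geometric q d th" and q0: "q \<noteq> 0"
  shows "q_serre n q A B"
proof -
  have eo: "eigen_ordering A d th" using es unfolding eigenvalue_seq_def by auto
  have Mc: "serre_mat n q A B \<in> carrier_mat n n" using serre_carrier[OF A B] .
  have zero_eig: "serre_mat n q A B *\<^sub>v x = 0\<^sub>v n" if j: "j \<le> d" and x: "x \<in> eigenspace_mat n A (th j)" for j x
  proof -
    have xc: "x \<in> carrier_vec n" and Ax: "A *\<^sub>v x = th j \<cdot>\<^sub>v x" using x unfolding eigenspace_mat_def by auto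
    obtain u1 u2 u3 where u: "u1 \<in> espace_at n A d th (int j - 1)" "u2 \<in> espace_at n A d th (int j)"
      "u3 \<in> espace_at n A d th (int j + 1)" "B *\<^sub>v x = u1 + (u2 + u3)"
      using es j x unfolding eigenvalue_seq_def by (blast dest: vsum_setD)
    note e1 = espace_eig[OF A u(1)] and e2 = espace_eig[OF A u(2)] and e3 = espace_eig[OF A u(3)]
    have ex: "serre_mat n q A B *\<^sub>v x = sp q (th (nat (int j - 1))) (th j) \<cdot>\<^sub>v u1 +
        (sp q (th (nat (int j))) (th j) \<cdot>\<^sub>v u2 + sp q (th (nat (int j + 1))) (th j) \<cdot>\<^sub>v u3)"
      by (rule serre_expand[OF A B xc Ax]) (use e1 e2 e3 u(4) in auto)
    have z1: "sp q (th (nat (int j - 1))) (th j) \<cdot>\<^sub>v u1 = 0\<^sub>v n"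
    proof (rule term_zero)
      show "u1 \<in> carrier_vec n" using e1 by auto
      show "sp q (th (nat (int j - 1))) (th j) = 0 \<or> u1 = 0\<^sub>v n"
      proof (cases "j = 0")
        case True then show ?thesis using u(1) unfolding espace_at_def by auto
      next
        case False
        then have "th j = th (j - 1) * q" using geo j unfolding q_geometric_def by auto
        moreover have "nat (int j - 1) = j - 1" using False by auto
        ultimately show ?thesis using q0 by (simp add: sp_zero_iff mult.commute)
      qed
    qed
    have z2: "sp q (th (nat (int j))) (th j) \<cdot>\<^sub>v u2 = 0\<^sub>v n"
      by (rule term_zero) (use e2 q0 in \<open>auto simp: sp_zero_iff\<close>)
    have z3: "sp q (th (nat (int j + 1))) (th j) \<cdot>\<^sub>v u3 = 0\<^sub>v n"
    proof (rule term_zero)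
      show "u3 \<in> carrier_vec n" using e3 by auto
      show "sp q (th (nat (int j + 1))) (th j) = 0 \<or> u3 = 0\<^sub>v n"
      proof (cases "j < d")
        case False then show ?thesis using u(3) unfolding espace_at_def by auto
      next
        case True
        then have "th (Suc j) = th j * q" using geo unfolding q_geometric_def by (metis Suc_leI diff_Suc_1 le_add1 plus_1_eq_Suc)
        moreover have "nat (int j + 1) = Suc j" by auto
        ultimately show ?thesis using q0 by (simp add: sp_zero_iff mult.commute)
      qed
    qed
    show ?thesis unfolding ex z1 z2 z3 by (intro eq_vecI) auto
  qed
  have "serre_mat n q A B = 0\<^sub>m n n"
  proof (rule mat_zero_by_vec[OF Mc])
    fix v :: "'a vec" assume v: "v \<in> carrier_vec n"
    obtain f where f: "v = vsum_upto n f (Suc d)" "\<forall>j<Suc d. f j \<in> eigenspace_mat n A (th j)"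
      using diag_decomp[OF A dg eo v] unfolding Wset_def by auto
    have "serre_mat n q A B *\<^sub>v v = vsum_upto n (\<lambda>j. serre_mat n q A B *\<^sub>v f j) (Suc d)"
      unfolding f(1) by (rule vsum_mult[OF Mc]) (use f(2) eig_carrier in blast)
    also have "\<dots> = 0\<^sub>v n"
    proof (intro eq_vecI)
      fix i assume "i < dim_vec (0\<^sub>v n :: 'a vec)"
      then have i: "i < n" by simp
      have "(\<Sum>j<Suc d. (serre_mat n q A B *\<^sub>v f j) $ i) = (\<Sum>j<Suc d. 0)"
      proof (rule sum.cong)
        fix j assume "j \<in> {..<Suc d}"
        then have "j \<le> d" "f j \<in> eigenspace_mat n A (th j)" using f(2) by auto
        then have "serre_mat n q A B *\<^sub>v f j = 0\<^sub>v n" by (rule zero_eig)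
        then show "(serre_mat n q A B *\<^sub>v f j) $ i = 0" using i by simp
      qed simp
      then show "vsum_upto n (\<lambda>j. serre_mat n q A B *\<^sub>v f j) (Suc d) $ i = 0\<^sub>v n $ i"
        using i by (simp only: vsum_index) simp
    qed simp
    finally show "serre_mat n q A B *\<^sub>v v = 0\<^sub>v n" .
  qed
  then show ?thesis unfolding q_serre_alt .
qed


lemma adjacent:
  fixes A B :: "'a::field mat"
  assumes A: "A \<in> carrier_mat n n" and B: "B \<in> carrier_mat n n"
    and irr: "\<forall>W. subspace_vec n W \<and> (\<forall>v\<in>W. A *\<^sub>v v \<in> W) \<and> (\<forall>v\<in>W. B *\<^sub>v v \<in> W)
           \<longrightarrow> W = {0\<^sub>v n} \<or> W = carrier_vec n"
    and es: "eigenvalue_seq n A B d th" and sq: "q_serre n q A B" and id: "i < d"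
  shows "sp q (th (Suc i)) (th i) = 0"
proof (rule ccontr)
  assume p3: "sp q (th (Suc i)) (th i) \<noteq> 0"
  have eo: "eigen_ordering A d th" using es unfolding eigenvalue_seq_def by auto
  have inj: "inj_on th {..d}" and img: "th ` {..d} = {\<theta>. eigenvalue A \<theta>}" using eo unfolding eigen_ordering_def by auto
  have M0: "serre_mat n q A B = 0\<^sub>m n n" using sq unfolding q_serre_alt .
  define W where "W = Wset n A th (Suc i)"
  have sub: "subspace_vec n W" unfolding subspace_vec_def W_def
    using Wset_carrier Wset_zero[OF A] Wset_add[OF A] Wset_smult[OF A] by blast
  have AW: "\<forall>v\<in>W. A *\<^sub>v v \<in> W" unfolding W_def using Wset_A[OF A] by blast
  have Bf: "B *\<^sub>v x \<in> W" if j: "j \<le> i" and x: "x \<in> eigenspace_mat n A (th j)" for j x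
  proof -
    have jd: "j \<le> d" using j id by auto
    have xc: "x \<in> carrier_vec n" and Ax: "A *\<^sub>v x = th j \<cdot>\<^sub>v x" using x unfolding eigenspace_mat_def by auto
    obtain u1 u2 u3 where u: "u1 \<in> espace_at n A d th (int j - 1)" "u2 \<in> espace_at n A d th (int j)"
      "u3 \<in> espace_at n A d th (int j + 1)" "B *\<^sub>v x = u1 + (u2 + u3)"
      using es jd x unfolding eigenvalue_seq_def by (blast dest: vsum_setD)
    note e1 = espace_eig[OF A u(1)] and e2 = espace_eig[OF A u(2)] and e3 = espace_eig[OF A u(3)]
    have u1W: "u1 \<in> W"
    proof (cases "j = 0")
      case True then have "u1 = 0\<^sub>v n" using u(1) unfolding espace_at_def by auto
      then show ?thesis unfolding W_def using Wset_zero[OF A] by simp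
    next
      case False
      then have "u1 \<in> eigenspace_mat n A (th (j - 1))" using u(1) jd unfolding espace_at_def
        by (auto simp: nat_diff_distrib)
      then show ?thesis unfolding W_def using False j by (intro Wset_eig[OF A]) auto
    qed
    have u2W: "u2 \<in> W" using u(2) jd j unfolding espace_at_def W_def by (auto intro: Wset_eig[OF A])
    have u3W: "u3 \<in> W"
    proof (cases "j < i")
      case True
      then have "u3 \<in> eigenspace_mat n A (th (Suc j))" using u(3) id unfolding espace_at_def
        by (auto simp: nat_add_distrib)
      then show ?thesis unfolding W_def using True by (intro Wset_eig[OF A]) auto
    next
      case False
      then have ji: "j = i" using j by auto
      define y1 where "y1 = th (nat (int j - 1))"
      define y3 where "y3 = th (nat (int j + 1))"
      have y3: "y3 = th (Suc i)" unfolding y3_def ji by (simp add: nat_add_distrib)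
      have y13: "y1 \<noteq> y3"
      proof -
        have "nat (int j - 1) \<le> d" "nat (int j - 1) \<noteq> Suc i" using ji id by auto
        then show ?thesis unfolding y1_def y3 using id by (intro inj_on_contraD[OF inj]) auto
      qed
      have ex: "serre_mat n q A B *\<^sub>v x = sp q y1 (th j) \<cdot>\<^sub>v u1 +
          (sp q (th (nat (int j))) (th j) \<cdot>\<^sub>v u2 + sp q y3 (th j) \<cdot>\<^sub>v u3)"
        unfolding y1_def y3_def by (rule serre_expand[OF A B xc Ax]) (use e1 e2 e3 u(4) in auto)
      have "serre_mat n q A B *\<^sub>v x = 0\<^sub>v n" using M0 xc by (intro eq_vecI) auto
      moreover have "sp q (th (nat (int j))) (th j) = 0" unfolding sp_def by (simp add: algebra_simps power2_eq_square power3_eq_cube)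
      ultimately have E: "sp q y1 (th j) \<cdot>\<^sub>v u1 + (0 \<cdot>\<^sub>v u2 + sp q y3 (th j) \<cdot>\<^sub>v u3) = 0\<^sub>v n"
        using ex by simp
      define a where "a = sp q y1 (th j)"
      define b where "b = sp q y3 (th j)"
      have bnz: "b \<noteq> 0" using p3 unfolding b_def y3 ji .
      have u1c: "u1 \<in> carrier_vec n" and Au1: "A *\<^sub>v u1 = y1 \<cdot>\<^sub>v u1" using e1 unfolding y1_def by auto
      have u2c: "u2 \<in> carrier_vec n" and Au2: "A *\<^sub>v u2 = th j \<cdot>\<^sub>v u2" using e2 by auto
      have u3c: "u3 \<in> carrier_vec n" and Au3: "A *\<^sub>v u3 = y3 \<cdot>\<^sub>v u3" using e3 unfolding y3_def by auto
      have A0: "A *\<^sub>v 0\<^sub>v n = 0\<^sub>v n" using A by (intro eq_vecI) auto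
      have "A *\<^sub>v (a \<cdot>\<^sub>v u1 + (0 \<cdot>\<^sub>v u2 + b \<cdot>\<^sub>v u3)) = A *\<^sub>v 0\<^sub>v n"
        using E unfolding a_def b_def by simp
      then have E2: "a \<cdot>\<^sub>v (y1 \<cdot>\<^sub>v u1) + (0 \<cdot>\<^sub>v (th j \<cdot>\<^sub>v u2) + b \<cdot>\<^sub>v (y3 \<cdot>\<^sub>v u3)) = 0\<^sub>v n"
        using A u1c u2c u3c
        by (simp add: mult_add_distrib_mat_vec mult_mat_vec Au1 Au2 Au3 A0 del: smult_smult_assoc)
      have "u3 = 0\<^sub>v n"
      proof (intro eq_vecI)
        fix k assume "k < dim_vec (0\<^sub>v n :: 'a vec)"
        then have k: "k < n" by simp
        have c1: "a * u1 $ k + b * u3 $ k = 0"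
          using arg_cong[OF E, of "\<lambda>v. v $ k"] k u1c u2c u3c unfolding a_def b_def by simp
        have c2: "a * (y1 * u1 $ k) + b * (y3 * u3 $ k) = 0"
          using arg_cong[OF E2, of "\<lambda>v. v $ k"] k u1c u2c u3c by simp
        have "b * (y3 - y1) * u3 $ k = 0"
        proof -
          have "b * (y3 - y1) * u3 $ k = (a * (y1 * u1 $ k) + b * (y3 * u3 $ k)) - y1 * (a * u1 $ k + b * u3 $ k)"
            by (simp add: algebra_simps)
          then show ?thesis using c1 c2 by simp
        qed
        then show "u3 $ k = 0\<^sub>v n $ k" using bnz y13 k by simp
      qed (use u3c in simp)
      then show ?thesis unfolding W_def using Wset_zero[OF A] by simp
    qed
    show ?thesis unfolding u(4) W_def using u1W u2W u3W unfolding W_def by (intro Wset_add[OF A])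
  qed
  have BW: "\<forall>v\<in>W. B *\<^sub>v v \<in> W"
  proof
    fix v assume "v \<in> W"
    then obtain f where f: "v = vsum_upto n f (Suc i)" "\<forall>j<Suc i. f j \<in> eigenspace_mat n A (th j)"
      unfolding W_def Wset_def by auto
    have "B *\<^sub>v v = vsum_upto n (\<lambda>j. B *\<^sub>v f j) (Suc i)"
      unfolding f(1) by (rule vsum_mult[OF B]) (use f(2) eig_carrier in blast)
    also have "\<dots> \<in> W" unfolding W_def
    proof (rule Wset_vsum[OF A])
      fix j assume "j < Suc i"
      then show "B *\<^sub>v f j \<in> Wset n A th (Suc i)" using Bf[of j "f j"] f(2) unfolding W_def by auto
    qed
    finally show "B *\<^sub>v v \<in> W" .
  qed
  have ev: "\<exists>w. w \<in> eigenspace_mat n A (th k) \<and> w \<noteq> 0\<^sub>v n" if "k \<le> d" for k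
  proof -
    have "eigenvalue A (th k)" using img that by auto
    then obtain w where "eigenvector A w (th k)" unfolding eigenvalue_def by auto
    then show ?thesis using A unfolding eigenvector_def eigenspace_mat_def by auto
  qed
  obtain w0 where w0: "w0 \<in> eigenspace_mat n A (th 0)" "w0 \<noteq> 0\<^sub>v n" using ev[of 0] by auto
  obtain w1 where w1: "w1 \<in> eigenspace_mat n A (th (Suc i))" "w1 \<noteq> 0\<^sub>v n" using ev[of "Suc i"] id by auto
  have "w0 \<in> W" unfolding W_def by (rule Wset_eig[OF A, of _ th 0]) (use w0 in auto)
  then have "W \<noteq> {0\<^sub>v n}" using w0 by auto
  moreover have "W \<noteq> carrier_vec n"
  proof
    assume "W = carrier_vec n"
    then have "w1 \<in> W" using w1 eig_carrier by blast
    moreover have "\<forall>m<Suc i. th (Suc i) \<noteq> th m"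
      proof (intro allI impI)
      fix m assume m: "m < Suc i"
      show "th (Suc i) \<noteq> th m" by (rule inj_on_contraD[OF inj]) (use m id in auto)
    qed
    ultimately have "w1 = 0\<^sub>v n" using Wset_exclude[OF A w1(1)] unfolding W_def by blast
    then show False using w1 by simp
  qed
  ultimately show False using irr sub AW BW by blast
qed


lemma espace_rev: "espace_at n A d (\<lambda>i. th (d - i)) j = espace_at n A d th (int d - j)"
proof (cases "0 \<le> j \<and> j \<le> int d")
  case True
  then have "nat (int d - j) = d - nat j" by auto
  then show ?thesis using True unfolding espace_at_def by auto
next
  case False
  then show ?thesis unfolding espace_at_def by auto
qed

lemma espace_carrier: "A \<in> carrier_mat n n \<Longrightarrow> u \<in> espace_at n A d th j \<Longrightarrow> u \<in> carrier_vec n"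
  using espace_eig by blast

lemma rev_seq:
  fixes A B :: "'a::field mat"
  assumes A: "A \<in> carrier_mat n n" and es: "eigenvalue_seq n A B d th"
  shows "eigenvalue_seq n A B d (\<lambda>i. th (d - i))"
proof -
  have inj: "inj_on th {..d}" and img: "th ` {..d} = {\<theta>. eigenvalue A \<theta>}"
    using es unfolding eigenvalue_seq_def eigen_ordering_def by auto
  have r: "(\<lambda>i. d - i) ` {..d} = {..d}"
  proof
    show "{..d} \<subseteq> (\<lambda>i. d - i) ` {..d}"
    proof
      fix x assume "x \<in> {..d}"
      then have "x = d - (d - x)" "d - x \<in> {..d}" by auto
      then show "x \<in> (\<lambda>i. d - i) ` {..d}" by blast
    qed
  qed auto
  have rinj: "inj_on (\<lambda>i. d - i) {..d}" unfolding inj_on_def by auto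
  have "inj_on (th \<circ> (\<lambda>i. d - i)) {..d}"
    using rinj inj r by (intro comp_inj_on) auto
  then have inj': "inj_on (\<lambda>i. th (d - i)) {..d}" by (simp add: comp_def)
  have img': "(\<lambda>i. th (d - i)) ` {..d} = {\<theta>. eigenvalue A \<theta>}"
  proof -
    have "(\<lambda>i. th (d - i)) ` {..d} = th ` ((\<lambda>i. d - i) ` {..d})" by (simp add: image_image)
    also have "\<dots> = th ` {..d}" using r by simp
    finally show ?thesis using img by simp
  qed
  have seq: "B *\<^sub>v v \<in> vsum_set (espace_at n A d (\<lambda>i. th (d - i)) (int i - 1))
      (vsum_set (espace_at n A d (\<lambda>i. th (d - i)) (int i)) (espace_at n A d (\<lambda>i. th (d - i)) (int i + 1)))"
    if i: "i \<le> d" and v: "v \<in> eigenspace_mat n A (th (d - i))" for i v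
  proof -
    obtain u1 u2 u3 where u: "u1 \<in> espace_at n A d th (int (d - i) - 1)" "u2 \<in> espace_at n A d th (int (d - i))"
      "u3 \<in> espace_at n A d th (int (d - i) + 1)" "B *\<^sub>v v = u1 + (u2 + u3)"
    proof -
      have "d - i \<le> d" by simp
      then have "B *\<^sub>v v \<in> vsum_set (espace_at n A d th (int (d - i) - 1))
                     (vsum_set (espace_at n A d th (int (d - i))) (espace_at n A d th (int (d - i) + 1)))"
        using es v unfolding eigenvalue_seq_def by blast
      then show ?thesis using that by (blast dest: vsum_setD)
    qed
    have di: "int (d - i) = int d - int i" using i by auto
    have c: "u1 \<in> carrier_vec n" "u2 \<in> carrier_vec n" "u3 \<in> carrier_vec n"
      using espace_carrier[OF A] u by blast+
    have sw: "u1 + (u2 + u3) = u3 + (u2 + u1)" using c by (intro eq_vecI) auto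
    have e: "int d - (int i - 1) = int (d - i) + 1" "int d - int i = int (d - i)" "int d - (int i + 1) = int (d - i) - 1"
      using di by auto
    have "u3 + (u2 + u1) \<in> vsum_set (espace_at n A d th (int (d - i) + 1))
       (vsum_set (espace_at n A d th (int (d - i))) (espace_at n A d th (int (d - i) - 1)))"
      unfolding vsum_set_def using u(1-3) by blast
    then show ?thesis unfolding espace_rev e u(4) sw .
  qed
  show ?thesis unfolding eigenvalue_seq_def eigen_ordering_def using inj' img' seq by auto
qed

lemma geom_exists:
  fixes A B :: "'a::field mat"
  assumes A: "A \<in> carrier_mat n n" and es: "eigenvalue_seq n A B d th" and q0: "q \<noteq> 0"
    and adj: "\<And>i. i < d \<Longrightarrow> sp q (th (Suc i)) (th i) = 0"
  shows "\<exists>th'. eigenvalue_seq n A B d th' \<and> q_geometric q d th'"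
proof -
  have inj: "inj_on th {..d}" using es unfolding eigenvalue_seq_def eigen_ordering_def by auto
  have ne: "th a \<noteq> th b" if "a \<le> d" "b \<le> d" "a \<noteq> b" for a b
    by (rule inj_on_contraD[OF inj]) (use that in auto)
  have opt: "th (Suc i) = q * th i \<or> q * th (Suc i) = th i" if "i < d" for i
    using adj[OF that] ne[of "Suc i" i] that q0 by (auto simp: sp_zero_iff)
  show ?thesis
  proof (cases "d = 0")
    case True
    then show ?thesis using es unfolding q_geometric_def by auto
  next
    case False
    show ?thesis
    proof (cases "th 1 = q * th 0")
      case True
      have up: "th (Suc i) = q * th i" if "i < d" for i
        using that
      proof (induction i)
        case 0 then show ?case using True by simp
      next
        case (Suc i)
        have "th (Suc (Suc i)) = q * th (Suc i) \<or> q * th (Suc (Suc i)) = th (Suc i)" using opt Suc.prems by auto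
        moreover have "th (Suc i) = q * th i" using Suc by auto
        moreover have "th (Suc (Suc i)) \<noteq> th i" using ne Suc.prems by auto
        ultimately show ?case using q0 by auto
      qed
      have "q_geometric q d th" unfolding q_geometric_def
      proof (intro allI impI)
        fix i assume i: "1 \<le> i \<and> i \<le> d"
        then have "i - 1 < d" by auto
        then have "th (Suc (i - 1)) = q * th (i - 1)" by (rule up)
        moreover have "Suc (i - 1) = i" using i by auto
        ultimately show "th i = th (i - 1) * q" using i by (simp add: mult.commute)
      qed
      then show ?thesis using es by blast
    next
      case False2: False
      have down: "q * th (Suc i) = th i" if "i < d" for i
        using that
      proof (induction i)
        case 0 then show ?case using opt[of 0] False2 by simp
      next
        case (Suc i)
        have "th (Suc (Suc i)) = q * th (Suc i) \<or> q * th (Suc (Suc i)) = th (Suc i)" using opt Suc.prems by auto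
        moreover have "q * th (Suc i) = th i" using Suc by auto
        moreover have "th (Suc (Suc i)) \<noteq> th i" using ne Suc.prems by auto
        ultimately show ?case by auto
      qed
      have "q_geometric q d (\<lambda>i. th (d - i))" unfolding q_geometric_def
      proof (intro allI impI)
        fix i assume i: "1 \<le> i \<and> i \<le> d"
        then have "q * th (Suc (d - i)) = th (d - i)" using down by auto
        moreover have "d - (i - 1) = Suc (d - i)" using i by auto
        ultimately show "th (d - i) = th (d - (i - 1)) * q" by (simp add: mult.commute)
      qed
      then show ?thesis using rev_seq[OF A es] by blast
    qed
  qed
qed

theorem lemma4p8:
  fixes A B :: "'a::field mat" and q :: 'a and n :: nat
  assumes "TD_pair n A B"
    and "q \<noteq> 0" and "q \<noteq> 1" and "q \<noteq> -1"
  shows "(q_serre n q A B \<and> q_serre n q B A) \<longleftrightarrow>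
         ((\<exists>d th. eigenvalue_seq n A B d th \<and> q_geometric q d th) \<and>
          (\<exists>\<delta> th. eigenvalue_seq n B A \<delta> th \<and> q_geometric q \<delta> th))"
proof -
  have A: "A \<in> carrier_mat n n" and B: "B \<in> carrier_mat n n"
    and dA: "diagonalizable_mat A" and dB: "diagonalizable_mat B"
    and e1: "\<exists>d th. eigenvalue_seq n A B d th" and e2: "\<exists>\<delta> th. eigenvalue_seq n B A \<delta> th"
    and irr: "\<forall>W. subspace_vec n W \<and> (\<forall>v\<in>W. A *\<^sub>v v \<in> W) \<and> (\<forall>v\<in>W. B *\<^sub>v v \<in> W)
           \<longrightarrow> W = {0\<^sub>v n} \<or> W = carrier_vec n"
    using assms(1) unfolding TD_pair_def by auto
  have irr2: "\<forall>W. subspace_vec n W \<and> (\<forall>v\<in>W. B *\<^sub>v v \<in> W) \<and> (\<forall>v\<in>W. A *\<^sub>v v \<in> W)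
           \<longrightarrow> W = {0\<^sub>v n} \<or> W = carrier_vec n" using irr by blast
  show ?thesis
  proof
    assume s: "q_serre n q A B \<and> q_serre n q B A"
    obtain d th where es1: "eigenvalue_seq n A B d th" using e1 by blast
    obtain \<delta> th2 where es2: "eigenvalue_seq n B A \<delta> th2" using e2 by blast
    have g1: "\<exists>d th. eigenvalue_seq n A B d th \<and> q_geometric q d th"
      using geom_exists[OF A es1 assms(2) adjacent[OF A B irr es1]] s by blast
    have g2: "\<exists>\<delta> th. eigenvalue_seq n B A \<delta> th \<and> q_geometric q \<delta> th"
      using geom_exists[OF B es2 assms(2) adjacent[OF B A irr2 es2]] s by blast
    show "(\<exists>d th. eigenvalue_seq n A B d th \<and> q_geometric q d th) \<and>
          (\<exists>\<delta> th. eigenvalue_seq n B A \<delta> th \<and> q_geometric q \<delta> th)" using g1 g2 by blast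
  next
    assume g: "(\<exists>d th. eigenvalue_seq n A B d th \<and> q_geometric q d th) \<and>
          (\<exists>\<delta> th. eigenvalue_seq n B A \<delta> th \<and> q_geometric q \<delta> th)"
    then show "q_serre n q A B \<and> q_serre n q B A"
      using serre_of_geom[OF A B dA _ _ assms(2)] serre_of_geom[OF B A dB _ _ assms(2)] by blast
  qed
qed

end
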